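(* Let $i,j\in J$ be two jobs with $\varphi_i(0)>\varphi_j(0)$, $w_ip_j\neq w_jp_i$ and $t^*_{ij}\in(0,T)$, and let $S$ be a complete schedule with $t_j\notin[t^*_{ij},t^*_{ij}+p_j)$. (1) If $t_i<t^*_{ij}$ and job $j$ is processed before job $i$ in $S$, then $S$ is not a potential schedule. (2) If $t_i\ge t^*_{ij}+p_j$ and job $i$ is processed before job $j$ in $S$, then $S$ is not a potential schedule.
   Context: $J$ is a finite set of jobs; job $j$ has processing time $p_j>0$ and weight $w_j>0$; $T=\sum_{j\in J}p_j$. A complete schedule is an ordering of $J$ processed consecutively without idle time from time $0$; job $j$ has start time $t_j$. For $t\ge 0$, $\varphi_j(t)=\frac{w_j}{p_j(p_j+t)}$. For jobs $i,j$ with $w_ip_j\neq w_jp_i$, $t^*_{ij}=\frac{w_jp_i^2-w_ip_j^2}{w_ip_j-w_jp_i}$ (the unique real $t$ with $\varphi_i(t)=\varphi_j(t)$). Dominance rule: for an interval $I\subseteq[0,\infty)$, the relation "$i$ dominates $j$ on $I$" is violated by a schedule if $j$ is processed before $i$ and both $t_j\in I$ and $t_i-p_j\in I$. The rule contains, for each pair of distinct jobs $i,j$ with $(p_i,w_i)\ne(p_j,w_j)$: (1) if $\varphi_i(t)\ge\varphi_j(t)$ for all $t\ge 0$, "$i$ dominates $j$ on $[0,\infty)$"; (2) otherwise, if $\varphi_j(t)\ge\varphi_i(t)$ for all $t\ge0$, "$j$ dominates $i$ on $[0,\infty)$"; (3) otherwise, labelling the pair so that $\varphi_i(0)>\varphi_j(0)$,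 $t^*_{ij}>0$ is defined and the rule contains "$i$ dominates $j$ on $[0,t^*_{ij})$" and "$j$ dominates $i$ on $[t^*_{ij},\infty)$". A complete schedule is a potential schedule if it violates no relation of the rule. *)

theory Defs
  imports Complex_Main
begin

definition complete_schedule :: "'a set \<Rightarrow> 'a list \<Rightarrow> bool" where
  "complete_schedule J S \<longleftrightarrow> distinct S \<and> set S = J"

definition start_time :: "('a \<Rightarrow> real) \<Rightarrow> 'a list \<Rightarrow> 'a \<Rightarrow> real" where
  "start_time p S j = sum_list (map p (takeWhile (\<lambda>x. x \<noteq> j) S))"

definition before :: "'a list \<Rightarrow> 'a \<Rightarrow> 'a \<Rightarrow> bool" where
  "before S a b \<longleftrightarrow> (\<exists>k l. k < l \<and> l < length S \<and> S ! k = a \<and> S ! l = b)"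

definition phi :: "('a \<Rightarrow> real) \<Rightarrow> ('a \<Rightarrow> real) \<Rightarrow> 'a \<Rightarrow> real \<Rightarrow> real" where
  "phi p w j t = w j / (p j * (p j + t))"

definition tstar :: "('a \<Rightarrow> real) \<Rightarrow> ('a \<Rightarrow> real) \<Rightarrow> 'a \<Rightarrow> 'a \<Rightarrow> real" where
  "tstar p w i j = (w j * (p i)\<^sup>2 - w i * (p j)\<^sup>2) / (w i * p j - w j * p i)"

text \<open>The dominance rule: a set of triples (a, b, I) meaning "a dominates b on I".
  The clauses are instantiated for both labellings (i,j) of each unordered pair.\<close>
definition dominance_rule :: "('a \<Rightarrow> real) \<Rightarrow> ('a \<Rightarrow> real) \<Rightarrow> 'a set \<Rightarrow> ('a \<times> 'a \<times> real set) set" where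
  "dominance_rule p w J = {(a, b, I). \<exists>i j. i \<in> J \<and> j \<in> J \<and> i \<noteq> j \<and> (p i, w i) \<noteq> (p j, w j) \<and>
     (let c1 = (\<forall>t\<ge>0. phi p w i t \<ge> phi p w j t);
          c2 = (\<forall>t\<ge>0. phi p w j t \<ge> phi p w i t)
      in (c1 \<and> (a, b, I) = (i, j, {0..}))
       \<or> (\<not> c1 \<and> c2 \<and> (a, b, I) = (j, i, {0..}))
       \<or> (\<not> c1 \<and> \<not> c2 \<and> phi p w i 0 > phi p w j 0 \<and>
            ((a, b, I) = (i, j, {0..<tstar p w i j}) \<or> (a, b, I) = (j, i, {tstar p w i j..}))))}"

definition violates :: "('a \<Rightarrow> real) \<Rightarrow> 'a list \<Rightarrow> 'a \<Rightarrow> 'a \<Rightarrow> real set \<Rightarrow> bool" where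
  "violates p S a b I \<longleftrightarrow> before S b a \<and> start_time p S b \<in> I \<and> start_time p S a - p b \<in> I"

definition potential_schedule :: "('a \<Rightarrow> real) \<Rightarrow> ('a \<Rightarrow> real) \<Rightarrow> 'a set \<Rightarrow> 'a list \<Rightarrow> bool" where
  "potential_schedule p w J S \<longleftrightarrow> complete_schedule J S \<and>
     (\<forall>(a, b, I) \<in> dominance_rule p w J. \<not> violates p S a b I)"

end

theory Submission
  imports Defs
begin

lemma tw_distinct:
  "distinct S \<Longrightarrow> k < length S \<Longrightarrow> takeWhile (\<lambda>x. x \<noteq> S ! k) S = take k S"
proof (induction S arbitrary: k)
  case Nil then show ?case by simp
next
  case (Cons a S)
  show ?case
  proof (cases k)
    case 0 then show ?thesis by simp
  next
    case (Suc m)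
    have "S ! m \<noteq> a" using Cons.prems Suc by (auto simp: nth_mem)
    then show ?thesis using Cons Suc by simp
  qed
qed

lemma sum_nonneg_list:
  assumes "\<And>x. x \<in> set xs \<Longrightarrow> p x > (0::real)"
  shows "sum_list (map p xs) \<ge> 0"
  using assms by (induction xs) (auto simp: add_nonneg_nonneg less_imp_le)

lemma start_nonneg:
  assumes "\<And>x. x \<in> set S \<Longrightarrow> p x > (0::real)"
  shows "start_time p S a \<ge> 0"
  unfolding start_time_def
  by (rule sum_nonneg_list) (meson assms set_takeWhileD)

lemma before_start:
  assumes "distinct S" and "\<And>x. x \<in> set S \<Longrightarrow> p x > (0::real)" and "before S a b"
  shows "start_time p S b \<ge> start_time p S a + p a"
proof -
  obtain k l where kl: "k < l" "l < length S" "S ! k = a" "S ! l = b"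
    using assms(3) unfolding before_def by blast
  have ta: "start_time p S a = sum_list (map p (take k S))"
    unfolding start_time_def using tw_distinct[OF assms(1), of k] kl by simp
  have tb: "start_time p S b = sum_list (map p (take l S))"
    unfolding start_time_def using tw_distinct[OF assms(1), of l] kl by simp
  have "take l S = take (Suc k) S @ take (l - Suc k) (drop (Suc k) S)"
    using kl by (metis add_diff_inverse_nat not_less_eq take_add less_imp_le_nat not_le)
  moreover have "take (Suc k) S = take k S @ [a]"
    using kl by (simp add: take_Suc_conv_app_nth)
  moreover have "sum_list (map p (take (l - Suc k) (drop (Suc k) S))) \<ge> 0"
    by (rule sum_nonneg_list) (meson assms(2) in_set_dropD in_set_takeD)
  ultimately show ?thesis using ta tb by simp
qed

theorem lemma3:
  fixes J :: "'a set" and p w :: "'a \<Rightarrow> real" and S :: "'a list" and i j :: 'a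
  assumes "finite J"
    and "\<And>k. k \<in> J \<Longrightarrow> p k > 0"
    and "\<And>k. k \<in> J \<Longrightarrow> w k > 0"
    and "i \<in> J" and "j \<in> J"
    and "phi p w i 0 > phi p w j 0"
    and "w i * p j \<noteq> w j * p i"
    and "0 < tstar p w i j" and "tstar p w i j < (\<Sum>k\<in>J. p k)"
    and "complete_schedule J S"
    and "start_time p S j \<notin> {tstar p w i j ..< tstar p w i j + p j}"
  shows "(start_time p S i < tstar p w i j \<and> before S j i \<longrightarrow> \<not> potential_schedule p w J S)
       \<and> (start_time p S i \<ge> tstar p w i j + p j \<and> before S i j \<longrightarrow> \<not> potential_schedule p w J S)"
proof -
  define ts where "ts = tstar p w i j"
  have pi: "p i > 0" and pj: "p j > 0" and wi: "w i > 0" and wj: "w j > 0"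
    using assms by auto
  have ij: "i \<noteq> j" using assms(6) by auto
  have pw: "(p i, w i) \<noteq> (p j, w j)" using assms(6) unfolding phi_def by auto
  have dS: "distinct S" and sS: "set S = J" using assms(10) unfolding complete_schedule_def by auto
  have posS: "\<And>x. x \<in> set S \<Longrightarrow> p x > 0" using sS assms(2) by auto
  define A where "A = w i * p j ^ 2 - w j * p i ^ 2"
  define B where "B = w i * p j - w j * p i"
  have sgn: "phi p w i t - phi p w j t = (A + t * B) / (p i * (p i + t) * (p j * (p j + t)))"
    if "t \<ge> 0" for t
  proof -
    have "p i + t > 0" "p j + t > 0" using that pi pj by auto
    then have n1: "p i * (p i + t) \<noteq> 0" "p j * (p j + t) \<noteq> 0" using pi pj by auto
    have "phi p w i t - phi p w j t = (w i * (p j * (p j + t)) - (p i * (p i + t)) * w j) / (p i * (p i + t) * (p j * (p j + t)))"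
      unfolding phi_def using diff_frac_eq[OF n1] by simp
    moreover have "w i * (p j * (p j + t)) - (p i * (p i + t)) * w j = A + t * B"
      unfolding A_def B_def by (simp add: power2_eq_square algebra_simps)
    ultimately show ?thesis by simp
  qed
  have A0: "A > 0"
  proof -
    have "phi p w i 0 - phi p w j 0 > 0" using assms(6) by simp
    then have "A / (p i * p i * (p j * p j)) > 0" using sgn[of 0] by simp
    moreover have "p i * p i * (p j * p j) > 0" using pi pj by simp
    ultimately show ?thesis by (simp add: zero_less_divide_iff)
  qed
  have tsdef: "ts = - A / B" unfolding ts_def tstar_def A_def B_def by (simp add: field_simps)
  have B0: "B < 0"
  proof -
    have "B \<noteq> 0" using assms(7) B_def by simp
    moreover have "- A / B > 0" using assms(8) tsdef ts_def by simp
    ultimately show ?thesis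
    proof (cases "B > 0")
      case True
      then have "A / B > 0" using A0 by simp
      then show ?thesis using \<open>- A / B > 0\<close> by simp
    qed (use \<open>B \<noteq> 0\<close> in auto)
  qed
  have neg: "A + (ts + 1) * B < 0"
  proof -
    have "A + ts * B = 0" using tsdef B0 by (simp add: field_simps)
    then show ?thesis using B0 by (simp add: algebra_simps)
  qed
  have nc1: "\<not> (\<forall>t\<ge>0. phi p w i t \<ge> phi p w j t)"
  proof
    assume H: "\<forall>t\<ge>0. phi p w i t \<ge> phi p w j t"
    have t0: "ts + 1 \<ge> 0" using assms(8) ts_def by simp
    have "phi p w i (ts+1) - phi p w j (ts+1) < 0"
      using sgn[OF t0] neg pi pj t0 by (simp add: divide_neg_pos)
    then show False using H t0 by force
  qed
  have nc2: "\<not> (\<forall>t\<ge>0. phi p w j t \<ge> phi p w i t)"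
    using assms(6) by force
  have R1: "(i, j, {0..<ts}) \<in> dominance_rule p w J"
    unfolding dominance_rule_def ts_def using assms(4,5,6) ij pw nc1 nc2
    by (simp add: Let_def) blast
  have R2: "(j, i, {ts..}) \<in> dominance_rule p w J"
    unfolding dominance_rule_def ts_def using assms(4,5,6) ij pw nc1 nc2
    by (simp add: Let_def) blast
  have part1: "\<not> potential_schedule p w J S"
    if "start_time p S i < ts" "before S j i"
  proof -
    have "start_time p S i \<ge> start_time p S j + p j"
      using before_start[OF dS posS that(2)] .
    moreover have "start_time p S j \<ge> 0" using start_nonneg[OF posS] .
    ultimately have "violates p S i j {0..<ts}"
      unfolding violates_def using that pj by auto
    then show ?thesis using R1 unfolding potential_schedule_def by fastforce
  qed
  have part2: "\<not> potential_schedule p w J S"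
    if "start_time p S i \<ge> ts + p j" "before S i j"
  proof -
    have "start_time p S j \<ge> start_time p S i + p i"
      using before_start[OF dS posS that(2)] .
    then have "violates p S j i {ts..}"
      unfolding violates_def using that pj by auto
    then show ?thesis using R2 unfolding potential_schedule_def by fastforce
  qed
  show ?thesis using part1 part2 ts_def by blast
qed

end
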